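(* Let $N\ge1$ and consider linear subsystems $\Sigma_1,\dots,\Sigma_N$ and their interconnection $\Sigma$ as described in the context, with safe sets $X_i$, input sets $U_i$, $X=\prod_i X_i$, $U=\prod_i U_i$. For each $i\in[1;N]$ let $\rho_i\ge0$ and let $C_i^{\rho_i}:\mathbb{R}^{n_i}\rightrightarrows U_i$ be a $\rho_i$-inner safety controller for $\Sigma_i$ and safe set $X_i$. Define $C^{\rho}:\mathbb{R}^n\rightrightarrows U$ by $C^\rho(x)=\emptyset$ for $x\in\mathbb{R}^n\setminus X$ and, for $x=[x_1;\dots;x_N]\in X$, $$C^{\rho}(x)=\{u=[u_1;\dots;u_N]\in U\mid u_i\in C_i^{\rho_i}(x_i)\ \text{for all } i\in[1;N]\}.$$ Then $C^{\rho}$ is a $\rho$-inner safety controller for the interconnected system $\Sigma$, safe set $X$ and input set $U$, where $\rho=\|[\rho_1;\dots;\rho_N]\|$ (infinity norm).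
   Context: Subsystem $\Sigma_i$ is linear: $x_i(t+1)=A_ix_i(t)+B_iu_i(t)+D_iz_i(t)+w_i(t)$ with $A_i\in\mathbb{R}^{n_i\times n_i}$, $B_i\in\mathbb{R}^{n_i\times m_i}$, $D_i\in\mathbb{R}^{n_i\times p_i}$, $w_i(t)\in W_i\subseteq\mathbb{R}^{n_i}$ (compact disturbance set), and internal input $z_i=[z_{i1};\dots;z_{i(i-1)};z_{i(i+1)};\dots;z_{iN}]\in\mathbb{R}^{p_i}$, $z_{ij}\in\mathbb{R}^{p_{ij}}$; outputs are $h_{ij}(x_i)=H_{ij}x_i$ with $H_{ij}\in\mathbb{R}^{p_{ji}\times n_i}$ for $j\ne i$. The interconnected system $\Sigma$ has state $x=[x_1;\dots;x_N]\in\mathbb{R}^n$, input $u=[u_1;\dots;u_N]$, disturbance $w\in W=\prod_iW_i$, and transition $f(x,u,w)=[A_1x_1+B_1u_1+D_1z_1+w_1;\dots;A_Nx_N+B_Nu_N+D_Nz_N+w_N]$ with $z_{ij}=H_{ji}x_j$. $X_i\subseteq\mathbb{R}^{n_i}$, $U_i\subseteq\mathbb{R}^{m_i}$ are compact. For $i\ne j$ there are compact sets $Z_{ij}\subseteq\mathbb{R}^{p_{ij}}$ with $H_{ji}(X_j)\subseteq Z_{ij}$, and $Z_i=\prod_{j\ne i}Z_{ij}$; Minkowski sums of sets are denoted by $+$. A $\rho_i$-inner safety controller for $\Sigma_i$ and $X_i$ (in the paper, one obtained from an inner approximation of the maximal robust controlled invariant set with accuracy parameter $\rho_i$) is a set-valued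 map $C_i:\mathbb{R}^{n_i}\rightrightarrows U_i$ with (1) $C_i(x_i)\subseteq U_i$ for all $x_i$; (2) $\mathrm{dom}(C_i)=\{x_i\mid C_i(x_i)\ne\emptyset\}\subseteq X_i$; (3) for all $x_i\in\mathrm{dom}(C_i)$ and $u_i\in C_i(x_i)$: $A_ix_i+B_iu_i+D_iZ_i+W_i\subseteq\mathrm{dom}(C_i)$. A $\rho$-inner safety controller for $\Sigma$, $X$ and $U$ is a set-valued map $C:\mathbb{R}^n\rightrightarrows U$ with (1) $C(x)\subseteq U$; (2) $\mathrm{dom}(C)\subseteq X$; (3) for all $x\in\mathrm{dom}(C)$, $u\in C(x)$, $w\in W$: $f(x,u,w)\in\mathrm{dom}(C)$. *)

theory Defs
  imports "HOL-Analysis.Analysis"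
begin

text \<open>Vectors of R^k are represented as functions nat => real that vanish from index k on;
  a k x l matrix is a function nat => nat => real of which only entries (r,c) with r<k, c<l matter.\<close>

definition vecs :: "nat \<Rightarrow> (nat \<Rightarrow> real) set" where
  "vecs k = {v. \<forall>j\<ge>k. v j = 0}"

definition mv :: "nat \<Rightarrow> nat \<Rightarrow> (nat \<Rightarrow> nat \<Rightarrow> real) \<Rightarrow> (nat \<Rightarrow> real) \<Rightarrow> (nat \<Rightarrow> real)" where
  "mv r c M v = (\<lambda>i. if i < r then (\<Sum>j<c. M i j * v j) else 0)"

definition prodset :: "nat \<Rightarrow> (nat \<Rightarrow> (nat \<Rightarrow> real) set) \<Rightarrow> (nat \<Rightarrow> nat \<Rightarrow> real) set" where
  "prodset N S = {x. (\<forall>i\<in>{1..N}. x i \<in> S i) \<and> (\<forall>i. i \<notin> {1..N} \<longrightarrow> x i = (\<lambda>_. 0))}"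

text \<open>Local transition of subsystem i:
  A_i x_i + B_i u_i + D_i z_i + w_i, where D_i z_i = sum over j ~= i of D_ij z_ij
  (D_ij the column block of D_i acting on z_ij, of size n_i x p_ij).\<close>
definition sub_step ::
  "nat \<Rightarrow> (nat \<Rightarrow> nat) \<Rightarrow> (nat \<Rightarrow> nat) \<Rightarrow> (nat \<Rightarrow> nat \<Rightarrow> nat)
   \<Rightarrow> (nat \<Rightarrow> nat \<Rightarrow> nat \<Rightarrow> real) \<Rightarrow> (nat \<Rightarrow> nat \<Rightarrow> nat \<Rightarrow> real)
   \<Rightarrow> (nat \<Rightarrow> nat \<Rightarrow> nat \<Rightarrow> nat \<Rightarrow> real)
   \<Rightarrow> nat \<Rightarrow> (nat \<Rightarrow> real) \<Rightarrow> (nat \<Rightarrow> real) \<Rightarrow> (nat \<Rightarrow> nat \<Rightarrow> real) \<Rightarrow> (nat \<Rightarrow> real)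
   \<Rightarrow> (nat \<Rightarrow> real)" where
  "sub_step N n m p A B D i xi ui z wi =
     (\<lambda>r. mv (n i) (n i) (A i) xi r + mv (n i) (m i) (B i) ui r
          + (\<Sum>j\<in>{1..N} - {i}. mv (n i) (p i j) (D i j) (z j) r) + wi r)"

text \<open>rho_i-inner safety controller for subsystem Sigma_i and safe set X_i (conditions (1)-(3)).
  The accuracy parameter rho is only a label: the defining conditions do not involve it.\<close>
definition sub_inner_ctrl ::
  "nat \<Rightarrow> (nat \<Rightarrow> nat) \<Rightarrow> (nat \<Rightarrow> nat) \<Rightarrow> (nat \<Rightarrow> nat \<Rightarrow> nat)
   \<Rightarrow> (nat \<Rightarrow> nat \<Rightarrow> nat \<Rightarrow> real) \<Rightarrow> (nat \<Rightarrow> nat \<Rightarrow> nat \<Rightarrow> real)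
   \<Rightarrow> (nat \<Rightarrow> nat \<Rightarrow> nat \<Rightarrow> nat \<Rightarrow> real)
   \<Rightarrow> (nat \<Rightarrow> nat \<Rightarrow> (nat \<Rightarrow> real) set) \<Rightarrow> (nat \<Rightarrow> (nat \<Rightarrow> real) set)
   \<Rightarrow> (nat \<Rightarrow> (nat \<Rightarrow> real) set) \<Rightarrow> (nat \<Rightarrow> (nat \<Rightarrow> real) set)
   \<Rightarrow> nat \<Rightarrow> real \<Rightarrow> ((nat \<Rightarrow> real) \<Rightarrow> (nat \<Rightarrow> real) set) \<Rightarrow> bool" where
  "sub_inner_ctrl N n m p A B D Z W U X i rho Ci \<longleftrightarrow>
     (\<forall>xi. Ci xi \<subseteq> U i) \<and>
     {xi. Ci xi \<noteq> {}} \<subseteq> X i \<and>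
     (\<forall>xi \<in> {xi. Ci xi \<noteq> {}}. \<forall>ui \<in> Ci xi. \<forall>z. (\<forall>j\<in>{1..N} - {i}. z j \<in> Z i j) \<longrightarrow>
        (\<forall>wi\<in>W i. sub_step N n m p A B D i xi ui z wi \<in> {xi. Ci xi \<noteq> {}}))"

definition inter_step ::
  "nat \<Rightarrow> (nat \<Rightarrow> nat) \<Rightarrow> (nat \<Rightarrow> nat) \<Rightarrow> (nat \<Rightarrow> nat \<Rightarrow> nat)
   \<Rightarrow> (nat \<Rightarrow> nat \<Rightarrow> nat \<Rightarrow> real) \<Rightarrow> (nat \<Rightarrow> nat \<Rightarrow> nat \<Rightarrow> real)
   \<Rightarrow> (nat \<Rightarrow> nat \<Rightarrow> nat \<Rightarrow> nat \<Rightarrow> real) \<Rightarrow> (nat \<Rightarrow> nat \<Rightarrow> nat \<Rightarrow> nat \<Rightarrow> real)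
   \<Rightarrow> (nat \<Rightarrow> nat \<Rightarrow> real) \<Rightarrow> (nat \<Rightarrow> nat \<Rightarrow> real) \<Rightarrow> (nat \<Rightarrow> nat \<Rightarrow> real)
   \<Rightarrow> (nat \<Rightarrow> nat \<Rightarrow> real)" where
  "inter_step N n m p A B D H x u w =
     (\<lambda>i. if i \<in> {1..N}
          then sub_step N n m p A B D i (x i) (u i) (\<lambda>j. mv (p i j) (n j) (H j i) (x j)) (w i)
          else (\<lambda>_. 0))"

text \<open>rho-inner safety controller for a system with transition f, safe set X, input set U,
  disturbance set W (conditions (1)-(3)); rho is again only a label.\<close>
definition inner_ctrl ::
  "('x \<Rightarrow> 'u \<Rightarrow> 'w \<Rightarrow> 'x) \<Rightarrow> 'x set \<Rightarrow> 'u set \<Rightarrow> 'w set \<Rightarrow> real \<Rightarrow> ('x \<Rightarrow> 'u set) \<Rightarrow> bool" where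
  "inner_ctrl f X U W rho C \<longleftrightarrow>
     (\<forall>x. C x \<subseteq> U) \<and>
     {x. C x \<noteq> {}} \<subseteq> X \<and>
     (\<forall>x \<in> {x. C x \<noteq> {}}. \<forall>u \<in> C x. \<forall>w \<in> W. f x u w \<in> {x. C x \<noteq> {}})"

end

theory Submission
  imports Defs
begin

theorem proposition1:
  fixes N :: nat
    and n m :: "nat \<Rightarrow> nat" and p :: "nat \<Rightarrow> nat \<Rightarrow> nat"
    and A B :: "nat \<Rightarrow> nat \<Rightarrow> nat \<Rightarrow> real"
    and D H :: "nat \<Rightarrow> nat \<Rightarrow> nat \<Rightarrow> nat \<Rightarrow> real"
    and X U W :: "nat \<Rightarrow> (nat \<Rightarrow> real) set"
    and Z :: "nat \<Rightarrow> nat \<Rightarrow> (nat \<Rightarrow> real) set"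
    and rho :: "nat \<Rightarrow> real"
    and Cl :: "nat \<Rightarrow> (nat \<Rightarrow> real) \<Rightarrow> (nat \<Rightarrow> real) set"
    and C :: "(nat \<Rightarrow> nat \<Rightarrow> real) \<Rightarrow> (nat \<Rightarrow> nat \<Rightarrow> real) set"
  assumes N: "N \<ge> 1"
    and X: "\<And>i. i \<in> {1..N} \<Longrightarrow> X i \<subseteq> vecs (n i) \<and> compact (X i)"
    and U: "\<And>i. i \<in> {1..N} \<Longrightarrow> U i \<subseteq> vecs (m i) \<and> compact (U i)"
    and W: "\<And>i. i \<in> {1..N} \<Longrightarrow> W i \<subseteq> vecs (n i) \<and> compact (W i)"
    and Z: "\<And>i j. i \<in> {1..N} \<Longrightarrow> j \<in> {1..N} \<Longrightarrow> i \<noteq> j \<Longrightarrow>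
              Z i j \<subseteq> vecs (p i j) \<and> compact (Z i j)"
    and HZ: "\<And>i j. i \<in> {1..N} \<Longrightarrow> j \<in> {1..N} \<Longrightarrow> i \<noteq> j \<Longrightarrow>
              mv (p i j) (n j) (H j i) ` X j \<subseteq> Z i j"
    and rho: "\<And>i. i \<in> {1..N} \<Longrightarrow> rho i \<ge> 0"
    and Cl: "\<And>i. i \<in> {1..N} \<Longrightarrow> sub_inner_ctrl N n m p A B D Z W U X i (rho i) (Cl i)"
    and C_def: "\<And>x. C x = (if x \<in> prodset N X
                           then {u \<in> prodset N U. \<forall>i\<in>{1..N}. u i \<in> Cl i (x i)}
                           else {})"
  shows "inner_ctrl (inter_step N n m p A B D H) (prodset N X) (prodset N U) (prodset N W)
           (Max (rho ` {1..N})) C"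
proof -
  let ?f = "inter_step N n m p A B D H"
  have dom: "?f x u w \<in> {x. C x \<noteq> {}}"
    if xC: "C x \<noteq> {}" and uC: "u \<in> C x" and wW: "w \<in> prodset N W" for x u w
  proof -
    have xX: "x \<in> prodset N X" using xC C_def by (auto split: if_splits)
    have uU: "\<forall>i\<in>{1..N}. u i \<in> Cl i (x i)" using uC xX C_def by auto
    define x' where "x' = ?f x u w"
    have step: "x' i \<in> {xi. Cl i xi \<noteq> {}}" if i: "i \<in> {1..N}" for i
    proof -
      have S: "sub_inner_ctrl N n m p A B D Z W U X i (rho i) (Cl i)" using Cl i .
      have xi: "x i \<in> {xi. Cl i xi \<noteq> {}}" using uU i by auto
      have z: "\<forall>j\<in>{1..N} - {i}. (\<lambda>j. mv (p i j) (n j) (H j i) (x j)) j \<in> Z i j"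
      proof
        fix j assume j: "j \<in> {1..N} - {i}"
        then have "x j \<in> X j" using xX unfolding prodset_def by auto
        then show "(\<lambda>j. mv (p i j) (n j) (H j i) (x j)) j \<in> Z i j"
          using HZ[of i j] i j by auto
      qed
      have "w i \<in> W i" using wW i unfolding prodset_def by auto
      then have "sub_step N n m p A B D i (x i) (u i) (\<lambda>j. mv (p i j) (n j) (H j i) (x j)) (w i)
           \<in> {xi. Cl i xi \<noteq> {}}"
      proof -
        have "\<forall>xi \<in> {xi. Cl i xi \<noteq> {}}. \<forall>ui \<in> Cl i xi. \<forall>z. (\<forall>j\<in>{1..N} - {i}. z j \<in> Z i j) \<longrightarrow>
          (\<forall>wi\<in>W i. sub_step N n m p A B D i xi ui z wi \<in> {xi. Cl i xi \<noteq> {}})"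
          using S unfolding sub_inner_ctrl_def by (elim conjE)
        then show ?thesis using xi uU i z \<open>w i \<in> W i\<close> by (elim ballE allE impE; simp?)
      qed
      then show ?thesis using i unfolding x'_def inter_step_def by (simp only: if_True)
    qed
    have x'X: "x' \<in> prodset N X"
    proof -
      have "x' i \<in> X i" if "i \<in> {1..N}" for i
        using step[OF that] Cl[OF that] unfolding sub_inner_ctrl_def by blast
      moreover have "x' i = (\<lambda>_. 0)" if "i \<notin> {1..N}" for i
        unfolding x'_def inter_step_def by (simp only: if_not_P[OF that])
      ultimately show ?thesis unfolding prodset_def by blast
    qed
    define u' where "u' = (\<lambda>i. if i \<in> {1..N} then (SOME v. v \<in> Cl i (x' i)) else (\<lambda>_. 0))"
    have u'C: "u' i \<in> Cl i (x' i)" if "i \<in> {1..N}" for i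
    proof -
      have "\<exists>v. v \<in> Cl i (x' i)" using step[OF that] by auto
      then have "(SOME v. v \<in> Cl i (x' i)) \<in> Cl i (x' i)" by (rule someI_ex)
      then show ?thesis unfolding u'_def by (simp only: if_P[OF that])
    qed
    have "u' \<in> prodset N U"
    proof -
      have "u' i \<in> U i" if "i \<in> {1..N}" for i
        using u'C[OF that] Cl[OF that] unfolding sub_inner_ctrl_def by blast
      moreover have "u' i = (\<lambda>_. 0)" if "i \<notin> {1..N}" for i
        unfolding u'_def by (simp only: if_not_P[OF that])
      ultimately show ?thesis unfolding prodset_def by blast
    qed
    then have "u' \<in> C x'" using C_def x'X u'C by auto
    then show ?thesis unfolding x'_def by auto
  qed
  show ?thesis unfolding inner_ctrl_def
  proof (intro conjI)
    show "\<forall>x. C x \<subseteq> prodset N U" using C_def by auto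
    show "{x. C x \<noteq> {}} \<subseteq> prodset N X" using C_def by (auto split: if_splits)
    show "\<forall>x\<in>{x. C x \<noteq> {}}. \<forall>u\<in>C x. \<forall>w\<in>prodset N W. ?f x u w \<in> {x. C x \<noteq> {}}"
      using dom by blast
  qed
qed

end
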